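(* Let $\nu$ be a Krull valuation on $\mathbb{K}[x]$, $\mu$ a valuation on $\overline{\mathbb{K}}[x]$ extending $\nu$, $Q$ a key polynomial for $\nu$, and $a$ an optimizing root of $Q$. Suppose there exist an integer $e\ge1$ and a nonzero $h\in\mathbb{K}[x]$ with $\deg h<\deg Q$ and $\nu(Q^e)=\nu(h)$, and let $r=Q^e/h$. Then $\mu_{x-a}(r)=0$ and the residue of $r$ in the residue field $\overline{\mathbb{K}}(x)\mu_{x-a}$ is transcendental over $\overline{\mathbb{K}}\mu$.
   Context: $\overline{\mathbb{K}}$ is an algebraic closure of $\mathbb{K}$; $\overline{\mathbb{K}}\mu$ the residue field of $\mu$ on $\overline{\mathbb{K}}$. $\mu_{x-a}$ is the truncation of $\mu$ at $x-a$: $\mu_{x-a}(\sum_i c_i(x-a)^i)=\min_i\{\mu(c_i)+i\mu(x-a)\}$, a valuation extended to $\overline{\mathbb{K}}(x)$. For non-constant $f$, $\delta(f)=\max\{\mu(x-c):f(c)=0\}$, and a root $c$ with $\mu(x-c)=\delta(f)$ is an optimizing root. Key polynomials: for nonzero $f\in\mathbb{K}[x]$, with Hasse derivatives $\partial_bf=\sum_{i\ge b}\binom{i}{b}a_ix^{i-b}$ for $f=\sum a_ix^i$, $\epsilon(f)=\max_{1\le b\le\deg f}(\nu(f)-\nu(\partial_bf))/b$ if $\deg f>0$ and $\epsilon(f)=-\infty$ if $f$ is constant; a monic $Q$ is a key polynomial for $\nu$ if $\epsilon(f)\ge\epsilon(Q)$ implies $\deg f\ge\deg Q$ for all $f$.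 *)

theory Defs
  imports "HOL-Computational_Algebra.Polynomial" "HOL-Computational_Algebra.Fraction_Field"
begin

(* K is a subfield of the field 'L; 'L plays the role of an algebraic closure of K *)
definition is_subfield :: "'a::field set \<Rightarrow> bool" where
  "is_subfield K \<longleftrightarrow> 0 \<in> K \<and> 1 \<in> K \<and>
     (\<forall>x\<in>K. \<forall>y\<in>K. x + y \<in> K \<and> x - y \<in> K \<and> x * y \<in> K) \<and>
     (\<forall>x\<in>K. x \<noteq> 0 \<longrightarrow> inverse x \<in> K)"

definition Kpoly :: "'a::field set \<Rightarrow> 'a poly set" where
  "Kpoly K = {f. \<forall>i. coeff f i \<in> K}"

definition is_algebraic_closure_of :: "'a::field set \<Rightarrow> bool" where
  "is_algebraic_closure_of K \<longleftrightarrow> is_subfield K \<and>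
     (\<forall>p::'a poly. 0 < degree p \<longrightarrow> (\<exists>z. poly p z = 0)) \<and>
     (\<forall>z::'a. \<exists>p\<in>Kpoly K. p \<noteq> 0 \<and> poly p z = 0)"

(* a (Krull) valuation on a ring S, given by its values on nonzero elements
   (the value of 0 is infinity and is not represented) *)
definition valuation_on :: "'a::idom set \<Rightarrow> ('a \<Rightarrow> 'g::linordered_ab_group_add) \<Rightarrow> bool" where
  "valuation_on S v \<longleftrightarrow> (\<forall>x\<in>S. \<forall>y\<in>S. x \<noteq> 0 \<longrightarrow> y \<noteq> 0 \<longrightarrow>
      v (x * y) = v x + v y \<and> (x + y \<noteq> 0 \<longrightarrow> min (v x) (v y) \<le> v (x + y)))"

definition hasse_deriv :: "nat \<Rightarrow> 'a::comm_ring_1 poly \<Rightarrow> 'a poly" where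
  "hasse_deriv b f = (\<Sum>i\<in>{b..degree f}. monom (of_nat (i choose b) * coeff f i) (i - b))"

primrec nsmul :: "nat \<Rightarrow> 'g::monoid_add \<Rightarrow> 'g" where
  "nsmul 0 g = 0"
| "nsmul (Suc n) g = g + nsmul n g"

(* eps_ge nu f g  means  eps(f) \<ge> eps(g), where
   eps(f) = max_{1\<le>b\<le>deg f} (nu f - nu (hasse_deriv b f))/b  (in the divisible hull;
   terms with hasse_deriv b f = 0 contribute -infinity), eps(constant) = -infinity.
   The comparison x/b \<ge> y/c is expressed as c*x \<ge> b*y. *)
definition eps_ge :: "('a::field poly \<Rightarrow> 'g::linordered_ab_group_add) \<Rightarrow> 'a poly \<Rightarrow> 'a poly \<Rightarrow> bool" where
  "eps_ge \<nu> f g \<longleftrightarrow>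
     (if degree g = 0 then True
      else if degree f = 0 then False
      else (\<exists>b\<in>{1..degree f}. hasse_deriv b f \<noteq> 0 \<and>
              (\<forall>c\<in>{1..degree g}. hasse_deriv c g \<noteq> 0 \<longrightarrow>
                 nsmul b (\<nu> g - \<nu> (hasse_deriv c g)) \<le> nsmul c (\<nu> f - \<nu> (hasse_deriv b f)))))"

definition key_polynomial :: "'a::field set \<Rightarrow> ('a poly \<Rightarrow> 'g::linordered_ab_group_add) \<Rightarrow> 'a poly \<Rightarrow> bool" where
  "key_polynomial K \<nu> Q \<longleftrightarrow> Q \<in> Kpoly K \<and> lead_coeff Q = 1 \<and>
     (\<forall>f\<in>Kpoly K. f \<noteq> 0 \<longrightarrow> eps_ge \<nu> f Q \<longrightarrow> degree Q \<le> degree f)"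

definition optimizing_root :: "('a::field poly \<Rightarrow> 'g::linorder) \<Rightarrow> 'a poly \<Rightarrow> 'a \<Rightarrow> bool" where
  "optimizing_root \<mu> f a \<longleftrightarrow> 0 < degree f \<and> poly f a = 0 \<and>
     (\<forall>c. poly f c = 0 \<longrightarrow> \<mu> [:-c, 1:] \<le> \<mu> [:-a, 1:])"

(* truncation mu_{x-a}: f = sum c_i (x-a)^i, value min_i mu(c_i) + mu((x-a)^i) *)
definition trunc_val :: "('a::field poly \<Rightarrow> 'g::linordered_ab_group_add) \<Rightarrow> 'a \<Rightarrow> 'a poly \<Rightarrow> 'g" where
  "trunc_val \<mu> a f = Min {\<mu> [:coeff (pcompose f [:a, 1:]) i:] + \<mu> ([:-a, 1:] ^ i) | i.
                           coeff (pcompose f [:a, 1:]) i \<noteq> 0}"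

definition trunc_val_frac :: "('a::field poly \<Rightarrow> 'g::linordered_ab_group_add) \<Rightarrow> 'a \<Rightarrow> 'a poly fract \<Rightarrow> 'g" where
  "trunc_val_frac \<mu> a r = (case SOME pq. snd pq \<noteq> 0 \<and> r = Fract (fst pq) (snd pq) of
      (p, q) \<Rightarrow> trunc_val \<mu> a p - trunc_val \<mu> a q)"

definition in_val_ring :: "('f::field \<Rightarrow> 'g::linordered_ab_group_add) \<Rightarrow> 'f \<Rightarrow> bool" where
  "in_val_ring w s \<longleftrightarrow> s = 0 \<or> 0 \<le> w s"

definition in_max_ideal :: "('f::field \<Rightarrow> 'g::linordered_ab_group_add) \<Rightarrow> 'f \<Rightarrow> bool" where
  "in_max_ideal w s \<longleftrightarrow> s = 0 \<or> 0 < w s"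

(* The residue of r in the residue field of w (on the field F) is transcendental over the
   residue field of v (on the field k, embedded in F by emb, with w extending v):
   r lies in the valuation ring of w, and for every polynomial P over the residue field of v,
   written with lifted coefficients c_0..c_n in the valuation ring of v, not all in the maximal
   ideal (i.e. P nonzero), the residue of sum c_i r^i (= P(residue of r)) is nonzero. *)
definition residue_transcendental ::
  "('f::field \<Rightarrow> 'g::linordered_ab_group_add) \<Rightarrow> ('k::field \<Rightarrow> 'f) \<Rightarrow> ('k \<Rightarrow> 'g) \<Rightarrow> 'f \<Rightarrow> bool" where
  "residue_transcendental w emb v r \<longleftrightarrow> in_val_ring w r \<and>
     (\<forall>(n::nat) (c::nat \<Rightarrow> 'k).
        (\<forall>i\<le>n. in_val_ring v (c i)) \<and> (\<exists>i\<le>n. \<not> in_max_ideal v (c i)) \<longrightarrow>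
        \<not> in_max_ideal w (\<Sum>i\<le>n. emb (c i) * r ^ i))"

end

theory Submission
  imports Defs
begin


lemma nsmul_add: "nsmul (m + n) g = nsmul m g + nsmul n g"
  by (induction m) (auto simp: add.assoc)

lemma nsmul_Suc2: "nsmul (Suc n) g = nsmul n g + g"
  using nsmul_add[of n 1 g] by simp

lemma nsmul_distrib: "nsmul n (a + b) = nsmul n a + nsmul n (b::'g::ab_group_add)"
  by (induction n) (auto simp: algebra_simps)

lemma nsmul_minus: "nsmul n (a - b) = nsmul n a - nsmul n (b::'g::ab_group_add)"
  by (induction n) (auto simp: algebra_simps)

lemma nsmul_mult: "nsmul (m * n) g = nsmul m (nsmul n (g::'g::ab_group_add))"
  by (induction m) (auto simp: nsmul_add)

lemma nsmul_mono: "a \<le> b \<Longrightarrow> nsmul n a \<le> nsmul n (b::'g::ordered_ab_group_add)"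
  by (induction n) (auto intro: add_mono)

lemma nsmul_comm: "nsmul m (nsmul n (g::'g::ab_group_add)) = nsmul n (nsmul m g)"
  by (metis nsmul_mult mult.commute)

lemma L1: fixes u m h D n :: "'g::linordered_ab_group_add"
  shows "m \<le> h + n \<Longrightarrow> u \<le> D \<Longrightarrow> u + m - (D + n) \<le> h"
proof -
  assume a: "m \<le> h + n" "u \<le> D"
  have "u + m \<le> D + (h + n)" using add_mono[OF a(2) a(1)] .
  thus ?thesis by (simp add: algebra_simps)
qed
lemma L2: fixes u m h D n :: "'g::linordered_ab_group_add"
  shows "m \<le> h + n \<Longrightarrow> u < D \<Longrightarrow> u + m - (D + n) < h"
proof -
  assume a: "m \<le> h + n" "u < D"
  have "u + m < D + (h + n)" using add_less_le_mono[OF a(2) a(1)] .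
  thus ?thesis by (simp add: algebra_simps)
qed
lemma L3: fixes u m h k D n :: "'g::linordered_ab_group_add"
  shows "k + (D + n) = m \<Longrightarrow> m \<le> h + n \<Longrightarrow> u < D \<Longrightarrow> u + k < h"
proof -
  assume a: "k + (D + n) = m" "m \<le> h + n" "u < D"
  have e: "m - (D + n) = k" using a(1) by (simp add: diff_eq_eq)
  have "u + m - (D + n) < h" by (rule L2[OF a(2) a(3)])
  thus ?thesis using e by (simp add: add_diff_eq[symmetric])
qed
context
  fixes v :: "'a::idom \<Rightarrow> 'g::linordered_ab_group_add"
  assumes V: "valuation_on UNIV v"
begin

lemma v_mult: "x \<noteq> 0 \<Longrightarrow> y \<noteq> 0 \<Longrightarrow> v (x * y) = v x + v y"
  using V unfolding valuation_on_def by blast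

lemma v_add: "x \<noteq> 0 \<Longrightarrow> y \<noteq> 0 \<Longrightarrow> x + y \<noteq> 0 \<Longrightarrow> min (v x) (v y) \<le> v (x + y)"
  using V unfolding valuation_on_def by blast

lemma v_one: "v 1 = 0"
  using v_mult[of 1 1] by simp

lemma v_uminus: "v (- x) = v x"
proof (cases "x = 0")
  case False
  have "v ((-1) * (-1)) = v (-1) + v (-1)" by (rule v_mult) auto
  hence "v (-1) = 0" using v_one by (simp add: double_zero_sym)
  moreover have "v (-x) = v (-1) + v x" using v_mult[of "-1" x] False by simp
  ultimately show ?thesis by simp
qed simp

lemma v_power: "x \<noteq> 0 \<Longrightarrow> v (x ^ n) = nsmul n (v x)"
  by (induction n) (auto simp: v_one v_mult)

lemma v_ge2: "x + y \<noteq> 0 \<Longrightarrow> (x \<noteq> 0 \<Longrightarrow> m \<le> v x) \<Longrightarrow> (y \<noteq> 0 \<Longrightarrow> m \<le> v y) \<Longrightarrow> m \<le> v (x + y)"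
  by (cases "x = 0"; cases "y = 0") (auto dest!: v_add[of x y] simp: min_le_iff_disj intro: order_trans)

lemma v_gt2: "x + y \<noteq> 0 \<Longrightarrow> (x \<noteq> 0 \<Longrightarrow> m < v x) \<Longrightarrow> (y \<noteq> 0 \<Longrightarrow> m < v y) \<Longrightarrow> m < v (x + y)"
  by (cases "x = 0"; cases "y = 0") (auto dest!: v_add[of x y] simp: min_le_iff_disj intro: order_less_le_trans)

lemma v_strict: "y \<noteq> 0 \<Longrightarrow> (x \<noteq> 0 \<Longrightarrow> v y < v x) \<Longrightarrow> x + y \<noteq> 0 \<and> v (x + y) = v y"
proof (cases "x = 0")
  case False
  assume y: "y \<noteq> 0" and h: "x \<noteq> 0 \<Longrightarrow> v y < v x"
  have lt: "v y < v x" using h False by blast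
  have nz: "x + y \<noteq> 0"
  proof
    assume "x + y = 0" hence "x = - y" by (simp add: eq_neg_iff_add_eq_0)
    thus False using lt v_uminus[of y] by simp
  qed
  have ge: "min (v x) (v y) \<le> v (x + y)" using v_add[OF False y nz] .
  have "v y \<le> v (x + y)" using ge lt by (simp add: min_def split: if_splits)
  moreover have "v y \<le> v (x + y)"  using calculation .
  have "y = (x + y) + (- x)" by simp
  hence "min (v (x + y)) (v (-x)) \<le> v y"
    using v_add[OF nz, of "-x"] False y by (metis neg_equal_0_iff_equal)
  hence "v (x + y) \<le> v y" using lt v_uminus[of x] by (simp add: min_def split: if_splits)
  ultimately show ?thesis using nz by simp
qed simp

lemma v_sum_ge: "finite A \<Longrightarrow> (\<And>j. j \<in> A \<Longrightarrow> t j \<noteq> 0 \<Longrightarrow> m \<le> v (t j)) \<Longrightarrow> sum t A \<noteq> 0 \<Longrightarrow> m \<le> v (sum t A)"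
proof (induction A rule: finite_induct)
  case (insert x F)
  show ?case unfolding sum.insert[OF insert(1,2)]
    by (rule v_ge2) (use insert in \<open>auto\<close>)
qed simp

lemma v_sum_gt: "finite A \<Longrightarrow> (\<And>j. j \<in> A \<Longrightarrow> t j \<noteq> 0 \<Longrightarrow> m < v (t j)) \<Longrightarrow> sum t A \<noteq> 0 \<Longrightarrow> m < v (sum t A)"
proof (induction A rule: finite_induct)
  case (insert x F)
  show ?case unfolding sum.insert[OF insert(1,2)]
    by (rule v_gt2) (use insert in \<open>auto\<close>)
qed simp

lemma v_sum_unique: "finite A \<Longrightarrow> j0 \<in> A \<Longrightarrow> t j0 \<noteq> 0 \<Longrightarrow>
   (\<And>j. j \<in> A \<Longrightarrow> j \<noteq> j0 \<Longrightarrow> t j \<noteq> 0 \<Longrightarrow> v (t j0) < v (t j)) \<Longrightarrow>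
   sum t A \<noteq> 0 \<and> v (sum t A) = v (t j0)"
proof -
  assume A: "finite A" "j0 \<in> A" "t j0 \<noteq> 0" and h: "\<And>j. j \<in> A \<Longrightarrow> j \<noteq> j0 \<Longrightarrow> t j \<noteq> 0 \<Longrightarrow> v (t j0) < v (t j)"
  have eq: "sum t A = sum t (A - {j0}) + t j0"
    using A by (simp add: sum.remove add.commute)
  have "sum t (A - {j0}) \<noteq> 0 \<Longrightarrow> v (t j0) < v (sum t (A - {j0}))"
    by (rule v_sum_gt) (use A h in auto)
  from v_strict[OF A(3) this] show ?thesis unfolding eq .
qed

end



lemma hasse_coeff: "coeff (hasse_deriv b f) k = of_nat ((k + b) choose b) * coeff f (k + b)"
proof -
  have "coeff (hasse_deriv b f) k = (\<Sum>i\<in>{b..degree f}. if k = i - b then of_nat (i choose b) * coeff f i else 0)"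
    unfolding hasse_deriv_def coeff_sum coeff_monom by (rule sum.cong) auto
  also have "\<dots> = (if k + b \<le> degree f then of_nat ((k + b) choose b) * coeff f (k + b) else 0)"
  proof (cases "k + b \<le> degree f")
    case True
    have "(\<Sum>i\<in>{b..degree f}. if k = i - b then of_nat (i choose b) * coeff f i else 0)
        = (\<Sum>i\<in>{b..degree f}. if i = k + b then of_nat (i choose b) * coeff f i else 0)"
      by (rule sum.cong) auto
    also have "\<dots> = of_nat ((k + b) choose b) * coeff f (k + b)"
      using True by (subst sum.delta) auto
    finally show ?thesis using True by simp
  next
    case False
    thus ?thesis by (simp, intro sum.neutral) auto
  qed
  also have "\<dots> = of_nat ((k + b) choose b) * coeff f (k + b)"
    by (auto simp: coeff_eq_0)
  finally show ?thesis .
qed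

lemma hasse_0: "hasse_deriv 0 f = f"
  by (rule poly_eqI) (simp add: hasse_coeff)

lemma hasse_const: "b \<ge> 1 \<Longrightarrow> hasse_deriv b [:c:] = 0"
  by (rule poly_eqI) (auto simp: hasse_coeff coeff_pCons split: nat.splits)

lemma hasse_smult: "hasse_deriv b (smult c f) = smult c (hasse_deriv b f)"
  by (rule poly_eqI) (simp add: hasse_coeff)

lemma hasse_lin: assumes "b \<ge> 1"
  shows "hasse_deriv b ([:-c, 1:] * g) = [:-c, 1:] * hasse_deriv b g + hasse_deriv (b - 1) g"
proof (rule poly_eqI)
  fix k
  have lin: "coeff ([:-c, 1:] * p) n = (if n = 0 then 0 else coeff p (n - 1)) - c * coeff p n" for p :: "'a poly" and n
    by (cases n) (auto simp: coeff_pCons algebra_simps)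
  obtain b' where b: "b = Suc b'" using assms by (cases b) auto
  show "coeff (hasse_deriv b ([:-c, 1:] * g)) k = coeff ([:-c, 1:] * hasse_deriv b g + hasse_deriv (b - 1) g) k"
  proof (cases k)
    case 0
    thus ?thesis by (simp add: lin hasse_coeff b algebra_simps)
  next
    case (Suc k')
    have "((Suc k' + Suc b') choose (Suc b')) = ((k' + Suc b') choose (Suc b')) + ((k' + Suc b') choose b')"
      by simp
    thus ?thesis by (simp add: lin hasse_coeff b Suc algebra_simps)
  qed
qed

context
  fixes K :: "'a::field set"
  assumes SF: "is_subfield K"
begin

lemma K0: "0 \<in> K" and K1: "1 \<in> K" and Kadd: "x \<in> K \<Longrightarrow> y \<in> K \<Longrightarrow> x + y \<in> K"
  and Kmult: "x \<in> K \<Longrightarrow> y \<in> K \<Longrightarrow> x * y \<in> K"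
  using SF unfolding is_subfield_def by auto

lemma Ksum: "finite A \<Longrightarrow> (\<And>i. i \<in> A \<Longrightarrow> f i \<in> K) \<Longrightarrow> sum f A \<in> K"
  by (induction A rule: finite_induct) (auto intro: K0 Kadd)

lemma Knat: "of_nat n \<in> K"
  by (induction n) (auto intro: K0 K1 Kadd)

lemma Kpoly_mult: "p \<in> Kpoly K \<Longrightarrow> q \<in> Kpoly K \<Longrightarrow> p * q \<in> Kpoly K"
  unfolding Kpoly_def by (auto simp: coeff_mult intro!: Ksum Kmult)

lemma Kpoly_one: "1 \<in> Kpoly K"
  unfolding Kpoly_def by (auto simp: coeff_1 intro: K0 K1)

lemma Kpoly_power: "p \<in> Kpoly K \<Longrightarrow> p ^ n \<in> Kpoly K"
  by (induction n) (auto intro: Kpoly_one Kpoly_mult)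

lemma Kpoly_hasse: "p \<in> Kpoly K \<Longrightarrow> hasse_deriv b p \<in> Kpoly K"
  unfolding Kpoly_def by (auto simp: hasse_coeff intro!: Kmult Knat)

end

definition lprod :: "'a::comm_ring_1 list \<Rightarrow> 'a poly" where
  "lprod cs = prod_list (map (\<lambda>c. [:-c, 1:]) cs)"

lemma lprod_Cons[simp]: "lprod (c # cs) = [:-c, 1:] * lprod cs" and lprod_Nil[simp]: "lprod [] = 1"
  by (auto simp: lprod_def)

lemma lprod_nz: "lprod (cs :: 'a::idom list) \<noteq> 0"
  by (induction cs) (simp_all del: mult_pCons_left)

lemma lprod_degree: "degree (lprod (cs :: 'a::idom list)) = length cs"
  by (induction cs) (simp_all del: mult_pCons_left add: degree_mult_eq lprod_nz)

lemma lprod_monic: "lead_coeff (lprod (cs :: 'a::idom list)) = 1"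
  by (induction cs) (simp_all del: mult_pCons_left add: lead_coeff_mult)

lemma lprod_root: "poly (lprod cs) z = 0 \<longleftrightarrow> z \<in> set (cs :: 'a::idom list)"
  by (induction cs) auto

lemma factorization:
  fixes p :: "'a::field poly"
  assumes AC: "\<forall>p::'a poly. 0 < degree p \<longrightarrow> (\<exists>z. poly p z = 0)" and "p \<noteq> 0"
  shows "\<exists>cs. p = smult (lead_coeff p) (lprod cs) \<and> length cs = degree p"
  using assms(2)
proof (induction "degree p" arbitrary: p)
  case 0
  then show ?case by (auto elim: degree_eq_zeroE)
next
  case (Suc n)
  then obtain z where "poly p z = 0" using AC by (metis zero_less_Suc)
  then obtain q where q: "p = [:-z, 1:] * q" by (metis dvdE poly_eq_0_iff_dvd)
  have qnz: "q \<noteq> 0" using q Suc by auto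
  have dq: "degree q = n" using Suc(2) q qnz by (simp del: mult_pCons_left add: degree_mult_eq)
  obtain cs where cs: "q = smult (lead_coeff q) (lprod cs)" "length cs = degree q"
    using Suc(1)[OF dq[symmetric] qnz] by blast
  have "lead_coeff p = lead_coeff q" using q by (simp del: mult_pCons_left add: lead_coeff_mult)
  hence "p = smult (lead_coeff p) (lprod (z # cs))" using q cs
    by (metis lprod_Cons mult_smult_right)
  thus ?case using cs dq Suc(2) by (intro exI[of _ "z # cs"]) auto
qed



definition cnt :: "('a::field poly \<Rightarrow> 'g) \<Rightarrow> 'g \<Rightarrow> 'a list \<Rightarrow> nat" where
  "cnt \<mu> D cs = length (filter (\<lambda>c. \<mu> [:-c, 1:] = D) cs)"

lemma cnt_Cons: "cnt \<mu> D (c # cs) = (if \<mu> [:-c, 1:] = D then Suc (cnt \<mu> D cs) else cnt \<mu> D cs)"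
  by (simp add: cnt_def)

lemma cnt_le: "cnt \<mu> D cs \<le> length cs"
  by (simp add: cnt_def)

context
  fixes \<mu> :: "'a::field poly \<Rightarrow> 'g::linordered_ab_group_add"
  assumes V: "valuation_on UNIV \<mu>"
begin

lemma claims:
  assumes lc: "lc \<noteq> 0"
  shows "(\<forall>c\<in>set cs. \<mu> [:-c, 1:] \<le> D) \<Longrightarrow>
    (\<forall>b. hasse_deriv b (smult lc (lprod cs)) \<noteq> 0 \<longrightarrow>
        \<mu> (smult lc (lprod cs)) \<le> \<mu> (hasse_deriv b (smult lc (lprod cs))) + nsmul b D) \<and>
    (hasse_deriv (cnt \<mu> D cs) (smult lc (lprod cs)) \<noteq> 0 \<and>
        \<mu> (hasse_deriv (cnt \<mu> D cs) (smult lc (lprod cs))) + nsmul (cnt \<mu> D cs) D = \<mu> (smult lc (lprod cs))) \<and>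
    (\<forall>b. cnt \<mu> D cs < b \<longrightarrow> hasse_deriv b (smult lc (lprod cs)) \<noteq> 0 \<longrightarrow>
        \<mu> (smult lc (lprod cs)) < \<mu> (hasse_deriv b (smult lc (lprod cs))) + nsmul b D)"
proof (induction cs)
  case Nil
  have h: "hasse_deriv b (smult lc (lprod [])) = 0" if "b \<ge> 1" for b
    using hasse_const[OF that, of lc] by simp
  show ?case
  proof (intro conjI allI impI)
    fix b assume "hasse_deriv b (smult lc (lprod [])) \<noteq> 0"
    hence "b = 0" using h by (cases b) auto
    thus "\<mu> (smult lc (lprod [])) \<le> \<mu> (hasse_deriv b (smult lc (lprod []))) + nsmul b D"
      by (simp add: hasse_0)
  next
    show "hasse_deriv (cnt \<mu> D []) (smult lc (lprod [])) \<noteq> 0" using lc by (simp add: cnt_def hasse_0)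
    show "\<mu> (hasse_deriv (cnt \<mu> D []) (smult lc (lprod []))) + nsmul (cnt \<mu> D []) D = \<mu> (smult lc (lprod []))"
      by (simp add: cnt_def hasse_0)
  next
    fix b assume "cnt \<mu> D [] < b" "hasse_deriv b (smult lc (lprod [])) \<noteq> 0"
    thus "\<mu> (smult lc (lprod [])) < \<mu> (hasse_deriv b (smult lc (lprod []))) + nsmul b D"
      using h by (simp add: cnt_def)
  qed
next
  case (Cons c cs)
  define F where "F = smult lc (lprod cs)"
  define X where "X = [:-c, (1::'a):]"
  define u where "u = \<mu> X"
  define m where "m = \<mu> F"
  define s where "s = cnt \<mu> D cs"
  have Xnz: "X \<noteq> 0" by (simp add: X_def)
  have Fnz: "F \<noteq> 0" using lc lprod_nz by (simp add: F_def)
  have F': "smult lc (lprod (c # cs)) = X * F" by (simp add: F_def X_def del: mult_pCons_left)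
  have F'nz: "X * F \<noteq> 0" using Xnz Fnz by simp
  have muF': "\<mu> (X * F) = u + m" unfolding u_def m_def by (rule v_mult[OF V Xnz Fnz])
  have uD: "u \<le> D" using Cons.prems by (simp add: u_def X_def)
  have IH: "\<forall>b. hasse_deriv b F \<noteq> 0 \<longrightarrow> m \<le> \<mu> (hasse_deriv b F) + nsmul b D"
           "hasse_deriv s F \<noteq> 0" "\<mu> (hasse_deriv s F) + nsmul s D = m"
           "\<forall>b. s < b \<longrightarrow> hasse_deriv b F \<noteq> 0 \<longrightarrow> m < \<mu> (hasse_deriv b F) + nsmul b D"
    using Cons.IH Cons.prems unfolding F_def[symmetric] m_def[symmetric] s_def[symmetric] by auto
  have HL: "hasse_deriv (Suc b) (X * F) = X * hasse_deriv (Suc b) F + hasse_deriv b F" for b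
    using hasse_lin[of "Suc b" c F] by (simp add: X_def del: mult_pCons_left)
  have muXh: "\<mu> (X * hasse_deriv b F) = u + \<mu> (hasse_deriv b F)" if "hasse_deriv b F \<noteq> 0" for b
    unfolding u_def by (rule v_mult[OF V Xnz that])
  have XhD: "X * hasse_deriv b F \<noteq> 0 \<Longrightarrow> hasse_deriv b F \<noteq> 0" for b by auto
  have PA: "m' \<le> \<mu> (hasse_deriv b (X * F)) + nsmul b D" if "hasse_deriv b (X * F) \<noteq> 0" "m' = u + m" for b m'
  proof (cases b)
    case 0 thus ?thesis using that muF' by (simp add: hasse_0)
  next
    case (Suc b')
    let ?t = "u + m - nsmul b D"
    have "?t \<le> \<mu> (hasse_deriv b (X * F))"
      unfolding Suc HL
    proof (rule v_ge2[OF V])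
      show "X * hasse_deriv (Suc b') F + hasse_deriv b' F \<noteq> 0" using that HL Suc by simp
    next
      assume nz: "X * hasse_deriv (Suc b') F \<noteq> 0"
      have "m \<le> \<mu> (hasse_deriv (Suc b') F) + nsmul (Suc b') D" using IH(1) XhD[OF nz] by blast
      thus "u + m - nsmul (Suc b') D \<le> \<mu> (X * hasse_deriv (Suc b') F)"
        using muXh[OF XhD[OF nz]] by (simp add: algebra_simps)
    next
      assume nz: "hasse_deriv b' F \<noteq> 0"
      have "m \<le> \<mu> (hasse_deriv b' F) + nsmul b' D" using IH(1) nz by blast
      thus "u + m - nsmul (Suc b') D \<le> \<mu> (hasse_deriv b' F)"
        using L1[OF _ uD] by simp
    qed
    thus ?thesis using that Suc by (simp add: algebra_simps)
  qed
  have PC: "u + m < \<mu> (hasse_deriv b (X * F)) + nsmul b D" if "cnt \<mu> D (c # cs) < b" "hasse_deriv b (X * F) \<noteq> 0" for b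
  proof -
    have "b \<noteq> 0" using that(1) by auto
    then obtain b' where b: "b = Suc b'" using not0_implies_Suc by blast
    have bs: "s < b" using that(1) by (simp add: cnt_Cons s_def split: if_splits)
    let ?t = "u + m - nsmul b D"
    have "?t < \<mu> (hasse_deriv b (X * F))"
      unfolding b HL
    proof (rule v_gt2[OF V])
      show "X * hasse_deriv (Suc b') F + hasse_deriv b' F \<noteq> 0" using that HL b by simp
    next
      assume nz: "X * hasse_deriv (Suc b') F \<noteq> 0"
      have "m < \<mu> (hasse_deriv (Suc b') F) + nsmul (Suc b') D" using IH(4) XhD[OF nz] bs b by blast
      thus "u + m - nsmul (Suc b') D < \<mu> (X * hasse_deriv (Suc b') F)"
        using muXh[OF XhD[OF nz]] by (simp add: algebra_simps)
    next
      assume nz: "hasse_deriv b' F \<noteq> 0"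
      show "u + m - nsmul (Suc b') D < \<mu> (hasse_deriv b' F)"
      proof (cases "u = D")
        case True
        hence "s < b'" using that(1) b by (simp add: cnt_Cons s_def u_def X_def)
        hence "m < \<mu> (hasse_deriv b' F) + nsmul b' D" using IH(4) nz by blast
        thus ?thesis using True by (simp add: algebra_simps)
      next
        case False
        hence uD': "u < D" using uD by simp
        have "m \<le> \<mu> (hasse_deriv b' F) + nsmul b' D" using IH(1) nz by blast
        thus ?thesis using L2[OF _ uD'] by simp
      qed
    qed
    thus ?thesis by (simp add: algebra_simps)
  qed
  have PB: "hasse_deriv (cnt \<mu> D (c # cs)) (X * F) \<noteq> 0 \<and>
        \<mu> (hasse_deriv (cnt \<mu> D (c # cs)) (X * F)) + nsmul (cnt \<mu> D (c # cs)) D = u + m"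
  proof (cases "u = D")
    case True
    hence cs: "cnt \<mu> D (c # cs) = Suc s" by (simp add: cnt_Cons s_def u_def X_def)
    have lt: "\<mu> (hasse_deriv s F) < \<mu> (X * hasse_deriv (Suc s) F)" if nz: "X * hasse_deriv (Suc s) F \<noteq> 0"
    proof -
      have "m < \<mu> (hasse_deriv (Suc s) F) + nsmul (Suc s) D" using IH(4) XhD[OF nz] by blast
      hence "nsmul s D + \<mu> (hasse_deriv s F) < nsmul s D + (D + \<mu> (hasse_deriv (Suc s) F))"
        using IH(3) by (simp add: algebra_simps)
      hence "\<mu> (hasse_deriv s F) < D + \<mu> (hasse_deriv (Suc s) F)" by (rule add_less_imp_less_left)
      thus ?thesis using muXh[OF XhD[OF nz]] True by simp
    qed
    from v_strict[OF V IH(2) lt] show ?thesis unfolding cs HL using IH(3) True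
      by (simp add: algebra_simps)
  next
    case False
    hence uD': "u < D" using uD by simp
    hence cs: "cnt \<mu> D (c # cs) = s" by (simp add: cnt_Cons s_def u_def X_def)
    show ?thesis
    proof (cases s)
      case 0 thus ?thesis using cs F'nz muF' by (simp add: hasse_0)
    next
      case (Suc s0)
      have nz: "X * hasse_deriv s F \<noteq> 0" using IH(2) Xnz by simp
      have lt: "\<mu> (X * hasse_deriv s F) < \<mu> (hasse_deriv s0 F)" if nz0: "hasse_deriv s0 F \<noteq> 0"
      proof -
        have "m \<le> \<mu> (hasse_deriv s0 F) + nsmul s0 D" using IH(1) nz0 by blast
        moreover have "\<mu> (hasse_deriv s F) + (D + nsmul s0 D) = m" using IH(3) Suc by simp
        ultimately show ?thesis using muXh[OF IH(2)] L3[OF _ _ uD'] by simp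
      qed
      from v_strict[OF V nz lt] show ?thesis unfolding cs Suc HL using IH(3) muXh[OF IH(2)] Suc
        by (simp add: algebra_simps)
    qed
  qed
  show ?case unfolding F' muF'[symmetric]
    using PA PB PC muF' by (auto simp: m_def)
qed

end


lemma L4: fixes a b x y p q :: "'g::linordered_ab_group_add"
  shows "a \<le> x + p \<Longrightarrow> b \<le> y + q \<Longrightarrow> a + b - (p + q) \<le> x + y"
proof -
  assume "a \<le> x + p" "b \<le> y + q"
  from add_mono[OF this] show ?thesis by (simp add: algebra_simps)
qed

lemma L5: fixes a b x y p q :: "'g::linordered_ab_group_add"
  shows "a < x + p \<Longrightarrow> b \<le> y + q \<Longrightarrow> a + b - (p + q) < x + y"
proof -
  assume "a < x + p" "b \<le> y + q"
  from add_less_le_mono[OF this] show ?thesis by (simp add: algebra_simps)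
qed

lemma L6: fixes a b x y p q :: "'g::linordered_ab_group_add"
  shows "a \<le> x + p \<Longrightarrow> b < y + q \<Longrightarrow> a + b - (p + q) < x + y"
proof -
  assume "a \<le> x + p" "b < y + q"
  from add_le_less_mono[OF this] show ?thesis by (simp add: algebra_simps)
qed

context
  fixes \<mu> :: "'a::field poly \<Rightarrow> 'g::linordered_ab_group_add" and a :: 'a
  assumes V: "valuation_on UNIV \<mu>"
begin

definition vL :: "'a \<Rightarrow> 'g" where "vL c = \<mu> [:c:]"
definition dl :: 'g where "dl = \<mu> [:-a, 1:]"
definition wt :: "'a poly \<Rightarrow> nat \<Rightarrow> 'g" where "wt F i = vL (coeff F i) + nsmul i dl"
definition TT :: "'a poly \<Rightarrow> 'g" where "TT F = Min {wt F i | i. coeff F i \<noteq> 0}"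

lemma VL: "valuation_on UNIV vL"
  unfolding valuation_on_def vL_def
proof (intro ballI impI conjI)
  fix x y :: 'a assume "x \<noteq> 0" "y \<noteq> 0"
  have e: "[:x * y:] = [:x:] * [:y:]" "[:x + y:] = [:x:] + [:y:]" by simp_all
  show "\<mu> [:x * y:] = \<mu> [:x:] + \<mu> [:y:]" unfolding e(1) by (rule v_mult[OF V]) (use \<open>x \<noteq> 0\<close> \<open>y \<noteq> 0\<close> in auto)
  assume "x + y \<noteq> 0"
  thus "min (\<mu> [:x:]) (\<mu> [:y:]) \<le> \<mu> [:x + y:]" unfolding e(2) by (intro v_add[OF V]) (use \<open>x \<noteq> 0\<close> \<open>y \<noteq> 0\<close> in auto)
qed

lemma TT_fin: "finite {wt F i | i. coeff F i \<noteq> 0}"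
proof -
  have "{wt F i | i. coeff F i \<noteq> 0} \<subseteq> wt F ` {..degree F}"
    using le_degree by blast
  thus ?thesis by (rule finite_subset) simp
qed

lemma TT_le: "coeff F i \<noteq> 0 \<Longrightarrow> TT F \<le> wt F i"
proof -
  assume "coeff F i \<noteq> 0"
  hence "wt F i \<in> {wt F i | i. coeff F i \<noteq> 0}" by blast
  thus ?thesis unfolding TT_def by (rule Min_le[OF TT_fin])
qed

lemma TT_att: "F \<noteq> 0 \<Longrightarrow> \<exists>i. coeff F i \<noteq> 0 \<and> wt F i = TT F"
proof -
  assume "F \<noteq> 0"
  hence "coeff F (degree F) \<noteq> 0" by simp
  hence "{wt F i | i. coeff F i \<noteq> 0} \<noteq> {}" by blast
  have "TT F \<in> {wt F i | i. coeff F i \<noteq> 0}" unfolding TT_def by (rule Min_in[OF TT_fin \<open>_ \<noteq> {}\<close>])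
  then obtain i where "TT F = wt F i" "coeff F i \<noteq> 0" by (auto simp only: mem_Collect_eq)
  thus ?thesis by metis
qed

lemma TT_eqI: "(\<And>i. coeff F i \<noteq> 0 \<Longrightarrow> m \<le> wt F i) \<Longrightarrow> coeff F j \<noteq> 0 \<Longrightarrow> wt F j = m \<Longrightarrow> TT F = m"
  unfolding TT_def by (rule Min_eqI[OF TT_fin]) auto

definition lidx :: "'a poly \<Rightarrow> nat" where "lidx F = (LEAST i. coeff F i \<noteq> 0 \<and> wt F i = TT F)"

lemma lidx: "F \<noteq> 0 \<Longrightarrow> coeff F (lidx F) \<noteq> 0 \<and> wt F (lidx F) = TT F"
  unfolding lidx_def using TT_att by (rule LeastI_ex)

lemma lidx_less: "i < lidx F \<Longrightarrow> coeff F i \<noteq> 0 \<Longrightarrow> TT F < wt F i"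
  using not_less_Least[of i "\<lambda>i. coeff F i \<noteq> 0 \<and> wt F i = TT F"] TT_le[of F i]
  unfolding lidx_def by fastforce

lemma TT_mult: assumes F: "F \<noteq> 0" and G: "G \<noteq> 0" shows "TT (F * G) = TT F + TT G"
proof -
  have cm: "coeff (F * G) k = (\<Sum>i\<le>k. coeff F i * coeff G (k - i))" for k by (rule coeff_mult)
  have nk: "nsmul k dl = nsmul i dl + nsmul (k - i) dl" if "i \<le> k" for i k
    using nsmul_add[of i "k - i" dl] that by simp
  have tv: "vL (coeff F i * coeff G (k - i)) = vL (coeff F i) + vL (coeff G (k - i))"
    if "coeff F i * coeff G (k - i) \<noteq> 0" for i k using that v_mult[OF VL] by simp
  show ?thesis
  proof (rule TT_eqI)
    fix k assume nz: "coeff (F * G) k \<noteq> 0"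
    have "TT F + TT G - nsmul k dl \<le> vL (coeff (F * G) k)"
      unfolding cm
    proof (rule v_sum_ge[OF VL])
      fix i assume i: "i \<in> {..k}" and t: "coeff F i * coeff G (k - i) \<noteq> 0"
      have "TT F \<le> vL (coeff F i) + nsmul i dl" using TT_le[of F i] t by (simp add: wt_def)
      moreover have "TT G \<le> vL (coeff G (k - i)) + nsmul (k - i) dl" using TT_le[of G "k - i"] t by (simp add: wt_def)
      ultimately show "TT F + TT G - nsmul k dl \<le> vL (coeff F i * coeff G (k - i))"
        using L4 tv[OF t] nk[of i k] i by simp
    qed (use nz cm in auto)
    thus "TT F + TT G \<le> wt (F * G) k" by (simp add: wt_def algebra_simps)
  next
    let ?k = "lidx F + lidx G"
    have aF: "coeff F (lidx F) \<noteq> 0" "wt F (lidx F) = TT F" using lidx[OF F] by auto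
    have aG: "coeff G (lidx G) \<noteq> 0" "wt G (lidx G) = TT G" using lidx[OF G] by auto
    have t0: "coeff F (lidx F) * coeff G (?k - lidx F) \<noteq> 0" using aF aG by simp
    have v0: "vL (coeff F (lidx F) * coeff G (?k - lidx F)) = TT F + TT G - nsmul ?k dl"
      using aF aG tv[OF t0] nsmul_add[of "lidx F" "lidx G" dl] by (simp add: wt_def algebra_simps)
    have U: "(\<Sum>i\<le>?k. coeff F i * coeff G (?k - i)) \<noteq> 0 \<and>
        vL (\<Sum>i\<le>?k. coeff F i * coeff G (?k - i)) = vL (coeff F (lidx F) * coeff G (?k - lidx F))"
    proof (rule v_sum_unique[OF VL])
      fix i assume i: "i \<in> {..?k}" "i \<noteq> lidx F" and t: "coeff F i * coeff G (?k - i) \<noteq> 0"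
      have nkk: "nsmul ?k dl = nsmul i dl + nsmul (?k - i) dl" using nk i by simp
      show "vL (coeff F (lidx F) * coeff G (?k - lidx F)) < vL (coeff F i * coeff G (?k - i))"
      proof (cases "i < lidx F")
        case True
        have "TT F < vL (coeff F i) + nsmul i dl" using lidx_less[OF True] t by (simp add: wt_def)
        moreover have "TT G \<le> vL (coeff G (?k - i)) + nsmul (?k - i) dl" using TT_le[of G "?k - i"] t by (simp add: wt_def)
        ultimately show ?thesis using L5 tv[OF t] v0 nkk by simp
      next
        case False
        hence lt: "?k - i < lidx G" using i by auto
        have "TT F \<le> vL (coeff F i) + nsmul i dl" using TT_le[of F i] t by (simp add: wt_def)
        moreover have "TT G < vL (coeff G (?k - i)) + nsmul (?k - i) dl" using lidx_less[OF lt] t by (simp add: wt_def)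
        ultimately show ?thesis using L6 tv[OF t] v0 nkk by simp
      qed
    qed (use t0 in auto)
    thus "coeff (F * G) ?k \<noteq> 0" unfolding cm by simp
    show "wt (F * G) ?k = TT F + TT G"
      using U v0 unfolding cm wt_def by (simp add: algebra_simps)
  qed
qed

lemma sh_nz: "f \<noteq> 0 \<Longrightarrow> pcompose f [:a, 1:] \<noteq> 0"
  using pcompose_eq_0[of f "[:a, 1:]"] by auto

lemma tv_TT: "trunc_val \<mu> a f = TT (pcompose f [:a, 1:])"
proof -
  have "\<mu> ([:-a, 1:] ^ i) = nsmul i dl" for i
    unfolding dl_def by (rule v_power[OF V]) simp
  thus ?thesis unfolding trunc_val_def TT_def wt_def vL_def by simp
qed

lemma tv_mult: "f \<noteq> 0 \<Longrightarrow> g \<noteq> 0 \<Longrightarrow> trunc_val \<mu> a (f * g) = trunc_val \<mu> a f + trunc_val \<mu> a g"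
  unfolding tv_TT pcompose_mult by (rule TT_mult[OF sh_nz sh_nz])

lemma tv_const: "c \<noteq> 0 \<Longrightarrow> trunc_val \<mu> a [:c:] = vL c"
  unfolding tv_TT by (rule TT_eqI[of _ _ 0]) (auto simp: wt_def coeff_pCons split: nat.splits)

lemma tv_lin: "trunc_val \<mu> a [:-c, 1:] = (if c = a then dl else min (vL (a - c)) dl)"
proof -
  have P: "pcompose [:-c, 1:] [:a, 1:] = [:a - c, 1:]" by (simp add: pcompose_pCons)
  have w0: "wt [:a - c, 1:] 0 = vL (a - c)" and w1: "wt [:a - c, 1:] 1 = dl"
    by (auto simp: wt_def v_one[OF VL])
  have cf: "coeff [:a - c, 1:] i \<noteq> 0 \<Longrightarrow> i = 0 \<or> i = 1" for i
    by (cases i) (auto simp: coeff_pCons split: nat.splits)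
  show ?thesis unfolding tv_TT P
  proof (cases "c = a")
    case True
    thus "TT [:a - c, 1:] = (if c = a then dl else min (vL (a - c)) dl)"
    proof -
      have "coeff [:a - c, 1:] i \<noteq> 0 \<Longrightarrow> i = 1" for i
        using True by (cases i) (auto simp: coeff_pCons split: nat.splits)
      thus ?thesis using True w1 by (intro TT_eqI[of _ _ 1]) auto
    qed
  next
    case False
    have W: "coeff [:a - c, 1:] i \<noteq> 0 \<Longrightarrow> wt [:a - c, 1:] i = vL (a - c) \<or> wt [:a - c, 1:] i = dl" for i
      using cf[of i] w0 w1 by auto
    show "TT [:a - c, 1:] = (if c = a then dl else min (vL (a - c)) dl)"
    proof (cases "vL (a - c) \<le> dl")
      case True thus ?thesis using False w0 by (intro TT_eqI[of _ _ 0]) (auto dest!: W simp: min_def)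
    next
      case F2: False thus ?thesis using False w1 by (intro TT_eqI[of _ _ 1]) (auto dest!: W simp: min_def)
    qed
  qed
qed

lemma tv_frac: assumes "p \<noteq> 0" "q \<noteq> 0"
  shows "trunc_val_frac \<mu> a (Fract p q) = trunc_val \<mu> a p - trunc_val \<mu> a q"
proof -
  define pq where "pq = (SOME pq. snd pq \<noteq> 0 \<and> Fract p q = Fract (fst pq) (snd pq))"
  have "\<exists>pq. snd pq \<noteq> 0 \<and> Fract p q = Fract (fst pq) (snd pq)" using assms by (intro exI[of _ "(p, q)"]) auto
  hence h: "snd pq \<noteq> 0 \<and> Fract p q = Fract (fst pq) (snd pq)" unfolding pq_def by (rule someI_ex)
  obtain p' q' where pq': "pq = (p', q')" by (cases pq)
  have q': "q' \<noteq> 0" and e: "p * q' = p' * q" using h assms pq' eq_fract(1)[of q q' p p'] by auto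
  have p': "p' \<noteq> 0" using e assms q' by auto
  have "trunc_val \<mu> a p + trunc_val \<mu> a q' = trunc_val \<mu> a p' + trunc_val \<mu> a q"
    using tv_mult[OF assms(1) q'] tv_mult[OF p' assms(2)] e by simp
  hence "trunc_val \<mu> a p' - trunc_val \<mu> a q' = trunc_val \<mu> a p - trunc_val \<mu> a q"
    by (simp add: algebra_simps)
  thus ?thesis unfolding trunc_val_frac_def pq_def[symmetric] pq' by simp
qed

end

lemma mult_lprod:
  fixes V :: "'a::field poly \<Rightarrow> 'g::ab_group_add"
  assumes M: "\<And>f g. f \<noteq> 0 \<Longrightarrow> g \<noteq> 0 \<Longrightarrow> V (f * g) = V f + V g" and lc: "lc \<noteq> 0"
  shows "V (smult lc (lprod cs)) = V [:lc:] + sum_list (map (\<lambda>c. V [:-c, 1:]) cs)"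
proof (induction cs)
  case Nil thus ?case by simp
next
  case (Cons c cs)
  have e: "smult lc (lprod (c # cs)) = [:-c, 1:] * smult lc (lprod cs)" by (simp del: mult_pCons_left)
  have nz: "smult lc (lprod cs) \<noteq> 0" using lc lprod_nz by simp
  have "V (smult lc (lprod (c # cs))) = V [:-c, 1:] + V (smult lc (lprod cs))"
    unfolding e by (rule M[OF _ nz]) simp
  thus ?case unfolding Cons.IH by (simp add: algebra_simps del: lprod_Cons)
qed



context
  fixes K :: "'L::field set"
    and \<nu> \<mu> :: "'L poly \<Rightarrow> 'g::linordered_ab_group_add"
    and Q h :: "'L poly" and a :: 'L and e :: nat
  assumes AC: "is_algebraic_closure_of K"
    and VN: "valuation_on (Kpoly K) \<nu>"
    and V: "valuation_on UNIV \<mu>"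
    and EXT: "\<forall>f\<in>Kpoly K. f \<noteq> 0 \<longrightarrow> \<mu> f = \<nu> f"
    and KP: "key_polynomial K \<nu> Q"
    and OPT: "optimizing_root \<mu> Q a"
    and e1: "1 \<le> e"
    and hK: "h \<in> Kpoly K" and hnz: "h \<noteq> 0" and dh: "degree h < degree Q"
    and Qh: "\<nu> (Q ^ e) = \<nu> h"
begin

lemma SF: "is_subfield K" using AC unfolding is_algebraic_closure_of_def by blast
lemma ACL: "\<forall>p::'L poly. 0 < degree p \<longrightarrow> (\<exists>z. poly p z = 0)"
  using AC unfolding is_algebraic_closure_of_def by blast
lemma QK: "Q \<in> Kpoly K" and Qmonic: "lead_coeff Q = 1"
  using KP unfolding key_polynomial_def by auto
lemma Qnz: "Q \<noteq> 0" using Qmonic by auto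
lemma dQ: "0 < degree Q" and Qa: "poly Q a = 0" and optc: "\<And>c. poly Q c = 0 \<Longrightarrow> \<mu> [:-c, 1:] \<le> \<mu> [:-a, 1:]"
  using OPT unfolding optimizing_root_def by auto

lemma munu: "f \<in> Kpoly K \<Longrightarrow> f \<noteq> 0 \<Longrightarrow> \<nu> f = \<mu> f" using EXT by auto

definition qs where "qs = (SOME cs. Q = smult (lead_coeff Q) (lprod cs) \<and> length cs = degree Q)"
definition hs where "hs = (SOME cs. h = smult (lead_coeff h) (lprod cs) \<and> length cs = degree h)"

lemma Qfac0: "Q = smult (lead_coeff Q) (lprod qs) \<and> length qs = degree Q"
  unfolding qs_def by (rule someI_ex[OF factorization[OF ACL Qnz]])
lemma Qfac: "Q = smult 1 (lprod qs)" "length qs = degree Q"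
  using Qfac0 Qmonic by auto
lemma hfac0: "h = smult (lead_coeff h) (lprod hs) \<and> length hs = degree h"
  unfolding hs_def by (rule someI_ex[OF factorization[OF ACL hnz]])
lemma hfac: "h = smult (lead_coeff h) (lprod hs)" "length hs = degree h"
  using hfac0 by auto

lemma Qroots: "poly Q c = 0 \<longleftrightarrow> c \<in> set qs"
  by (subst Qfac(1)) (simp add: lprod_root)
lemma hroots: "poly h c = 0 \<longleftrightarrow> c \<in> set hs"
  using hnz by (subst hfac(1)) (simp add: lprod_root)

lemma qs_le: "c \<in> set qs \<Longrightarrow> \<mu> [:-c, 1:] \<le> \<mu> [:-a, 1:]"
  using optc Qroots by blast

lemma hs_lt: "d \<in> set hs \<Longrightarrow> \<mu> [:-d, 1:] < \<mu> [:-a, 1:]"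
proof (rule ccontr)
  assume d: "d \<in> set hs" and "\<not> \<mu> [:-d, 1:] < \<mu> [:-a, 1:]"
  hence dge: "\<mu> [:-a, 1:] \<le> \<mu> [:-d, 1:]" by simp
  define Dh where "Dh = Max ((\<lambda>c. \<mu> [:-c, 1:]) ` set hs)"
  have Dh_ge: "\<forall>c\<in>set hs. \<mu> [:-c, 1:] \<le> Dh" unfolding Dh_def by simp
  have "Dh \<in> (\<lambda>c. \<mu> [:-c, 1:]) ` set hs" unfolding Dh_def using d by (intro Max_in) auto
  then obtain d0 where d0: "d0 \<in> set hs" "\<mu> [:-d0, 1:] = Dh" by auto
  have deltaD: "\<mu> [:-a, 1:] \<le> Dh" using dge Dh_ge d by (blast intro: order_trans)
  define s where "s = cnt \<mu> Dh hs"
  have "d0 \<in> set (filter (\<lambda>c. \<mu> [:-c, 1:] = Dh) hs)" using d0 by simp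
  hence s1: "1 \<le> s" unfolding s_def cnt_def by (metis One_nat_def Suc_le_eq length_pos_if_in_set)
  have s2: "s \<le> degree h" using cnt_le hfac(2) s_def by metis
  have lch: "lead_coeff h \<noteq> 0" using hnz by simp
  note CH = claims[OF V lch Dh_ge, folded hfac(1), folded s_def]
  have qsb: "\<forall>c\<in>set qs. \<mu> [:-c, 1:] \<le> \<mu> [:-a, 1:]" using qs_le by blast
  note CQ = claims[OF V one_neq_zero qsb, folded Qfac(1)]
  have hsK: "hasse_deriv s h \<in> Kpoly K" by (rule Kpoly_hasse[OF SF hK])
  have "eps_ge \<nu> h Q"
    unfolding eps_ge_def
  proof -
    have "degree h \<noteq> 0" using s1 s2 by simp
    moreover have "\<exists>b\<in>{1..degree h}. hasse_deriv b h \<noteq> 0 \<and>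
              (\<forall>c\<in>{1..degree Q}. hasse_deriv c Q \<noteq> 0 \<longrightarrow>
                 nsmul b (\<nu> Q - \<nu> (hasse_deriv c Q)) \<le> nsmul c (\<nu> h - \<nu> (hasse_deriv b h)))"
    proof (intro bexI[of _ s] conjI ballI impI)
      show "s \<in> {1..degree h}" using s1 s2 by simp
      show nz: "hasse_deriv s h \<noteq> 0" using CH by blast
      fix c assume "c \<in> {1..degree Q}" "hasse_deriv c Q \<noteq> 0"
      hence cnz: "hasse_deriv c Q \<noteq> 0" by simp
      have cK: "hasse_deriv c Q \<in> Kpoly K" by (rule Kpoly_hasse[OF SF QK])
      have e1: "\<nu> h - \<nu> (hasse_deriv s h) = nsmul s Dh"
        using CH munu[OF hK hnz] munu[OF hsK nz] by (simp add: algebra_simps)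
      have "\<mu> Q \<le> \<mu> (hasse_deriv c Q) + nsmul c (\<mu> [:-a, 1:])" using CQ cnz by blast
      hence "\<nu> Q - \<nu> (hasse_deriv c Q) \<le> nsmul c (\<mu> [:-a, 1:])"
        using munu[OF QK Qnz] munu[OF cK cnz] by (simp add: algebra_simps)
      also have "\<dots> \<le> nsmul c Dh" by (rule nsmul_mono[OF deltaD])
      finally have "nsmul s (\<nu> Q - \<nu> (hasse_deriv c Q)) \<le> nsmul s (nsmul c Dh)" by (rule nsmul_mono)
      also have "\<dots> = nsmul c (nsmul s Dh)" by (rule nsmul_comm)
      finally show "nsmul s (\<nu> Q - \<nu> (hasse_deriv c Q)) \<le> nsmul c (\<nu> h - \<nu> (hasse_deriv s h))"
        unfolding e1 .
    qed
    ultimately show "if degree Q = 0 then True else if degree h = 0 then False else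
       (\<exists>b\<in>{1..degree h}. hasse_deriv b h \<noteq> 0 \<and>
              (\<forall>c\<in>{1..degree Q}. hasse_deriv c Q \<noteq> 0 \<longrightarrow>
                 nsmul b (\<nu> Q - \<nu> (hasse_deriv c Q)) \<le> nsmul c (\<nu> h - \<nu> (hasse_deriv b h))))"
      using dQ by simp
  qed
  hence "degree Q \<le> degree h" using KP hK hnz unfolding key_polynomial_def by blast
  thus False using dh by simp
qed


lemma lin_split: "[:-c, 1:] = [:-a, 1:] + [:a - c:]" by simp

lemma Xa_nz: "[:-a, (1::'L):] \<noteq> 0" by simp

lemma lin_Q: assumes c: "c \<in> set qs" shows "trunc_val \<mu> a [:-c, 1:] = \<mu> [:-c, 1:]"
proof (cases "c = a")
  case True thus ?thesis using tv_lin[OF V, of a c] by (simp add: dl_def[OF V])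
next
  case False
  hence ac: "[:a - c:] \<noteq> 0" by simp
  have T: "trunc_val \<mu> a [:-c, 1:] = min (vL \<mu> (a - c)) (\<mu> [:-a, 1:])"
    using tv_lin[OF V, of a c] False by (simp add: dl_def[OF V])
  have le: "\<mu> [:-c, 1:] \<le> \<mu> [:-a, 1:]" using qs_le[OF c] .
  show ?thesis
  proof (cases "vL \<mu> (a - c) < \<mu> [:-a, 1:]")
    case True
    have "[:-a, 1:] + [:a - c:] \<noteq> 0 \<and> \<mu> ([:-a, 1:] + [:a - c:]) = \<mu> [:a - c:]"
      by (rule v_strict[OF V ac]) (use True in \<open>simp add: vL_def[OF V]\<close>)
    hence "\<mu> [:-c, 1:] = \<mu> [:a - c:]" unfolding lin_split[symmetric] by blast
    thus ?thesis using T less_imp_le[OF True] by (simp add: vL_def[OF V] min_def)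
  next
    case False
    hence ge: "\<mu> [:-a, 1:] \<le> vL \<mu> (a - c)" by simp
    have "min (\<mu> [:-a, 1:]) (\<mu> [:a - c:]) \<le> \<mu> ([:-a, 1:] + [:a - c:])"
      by (rule v_add[OF V Xa_nz ac]) (subst lin_split[symmetric], simp)
    hence "min (\<mu> [:-a, 1:]) (\<mu> [:a - c:]) \<le> \<mu> [:-c, 1:]" unfolding lin_split[symmetric] .
    hence "\<mu> [:-a, 1:] \<le> \<mu> [:-c, 1:]" using ge by (simp add: vL_def[OF V] min_def split: if_splits)
    thus ?thesis using T ge le by (simp add: min_def)
  qed
qed

lemma lin_h: assumes d: "d \<in> set hs"
  shows "trunc_val \<mu> a [:-d, 1:] = \<mu> [:-d, 1:] \<and> vL \<mu> (a - d) = \<mu> [:-d, 1:] \<and> d \<noteq> a"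
proof -
  have lt: "\<mu> [:-d, 1:] < \<mu> [:-a, 1:]" by (rule hs_lt[OF d])
  hence da: "d \<noteq> a" by auto
  hence ac: "[:a - d:] \<noteq> 0" by simp
  have T: "trunc_val \<mu> a [:-d, 1:] = min (vL \<mu> (a - d)) (\<mu> [:-a, 1:])"
    using tv_lin[OF V, of a d] da by (simp add: dl_def[OF V])
  have vlt: "vL \<mu> (a - d) < \<mu> [:-a, 1:]"
  proof (rule ccontr)
    assume "\<not> vL \<mu> (a - d) < \<mu> [:-a, 1:]"
    hence ge: "\<mu> [:-a, 1:] \<le> vL \<mu> (a - d)" by simp
    have "min (\<mu> [:-a, 1:]) (\<mu> [:a - d:]) \<le> \<mu> ([:-a, 1:] + [:a - d:])"
      by (rule v_add[OF V Xa_nz ac]) (subst lin_split[symmetric], simp)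
    hence "min (\<mu> [:-a, 1:]) (\<mu> [:a - d:]) \<le> \<mu> [:-d, 1:]" unfolding lin_split[symmetric] .
    hence "\<mu> [:-a, 1:] \<le> \<mu> [:-d, 1:]" using ge by (simp add: vL_def[OF V] min_def split: if_splits)
    thus False using lt by simp
  qed
  have "[:-a, 1:] + [:a - d:] \<noteq> 0 \<and> \<mu> ([:-a, 1:] + [:a - d:]) = \<mu> [:a - d:]"
    by (rule v_strict[OF V ac]) (use vlt in \<open>simp add: vL_def[OF V]\<close>)
  hence "\<mu> [:-d, 1:] = vL \<mu> (a - d)" unfolding lin_split[symmetric] by (simp add: vL_def[OF V])
  thus ?thesis using T less_imp_le[OF vlt] da by (simp add: min_def)
qed

lemma mu_one: "\<mu> [:1:] = 0" using v_one[OF V] by (simp add: one_pCons[symmetric])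

lemma tvQ: "trunc_val \<mu> a Q = \<mu> Q"
proof -
  have "trunc_val \<mu> a Q = trunc_val \<mu> a [:1:] + sum_list (map (\<lambda>c. trunc_val \<mu> a [:-c, 1:]) qs)"
    by (subst Qfac(1), rule mult_lprod) (auto intro: tv_mult[OF V])
  also have "\<dots> = \<mu> [:1:] + sum_list (map (\<lambda>c. \<mu> [:-c, 1:]) qs)"
    using tv_const[OF V, of 1 a] lin_Q mu_one by (simp add: vL_def[OF V] cong: map_cong)
  also have "\<dots> = \<mu> Q"
    by (subst (2) Qfac(1), rule mult_lprod[symmetric]) (auto intro: v_mult[OF V])
  finally show ?thesis .
qed

lemma poly_lprod: "vL \<mu> (poly (smult lc (lprod cs)) a) = vL \<mu> lc + sum_list (map (\<lambda>c. vL \<mu> (a - c)) cs)"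
  if "lc \<noteq> 0" "\<forall>c\<in>set cs. c \<noteq> a" for lc cs
  using that(2)
proof (induction cs)
  case Nil thus ?case by simp
next
  case (Cons c cs)
  have "poly (smult lc (lprod (c # cs))) a = (a - c) * poly (smult lc (lprod cs)) a" by (simp add: algebra_simps)
  moreover have "poly (smult lc (lprod cs)) a \<noteq> 0" using that(1) Cons.prems by (auto simp: lprod_root)
  moreover have "a - c \<noteq> 0" using Cons.prems by auto
  ultimately show ?case using v_mult[OF VL[OF V], of "a - c" "poly (smult lc (lprod cs)) a"] Cons
    by (simp add: algebra_simps)
qed

lemma tvh: "trunc_val \<mu> a h = \<mu> h \<and> vL \<mu> (poly h a) = \<mu> h \<and> poly h a \<noteq> 0"
proof -
  have lch: "lead_coeff h \<noteq> 0" using hnz by simp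
  have "trunc_val \<mu> a h = trunc_val \<mu> a [:lead_coeff h:] + sum_list (map (\<lambda>c. trunc_val \<mu> a [:-c, 1:]) hs)"
    by (subst hfac(1), rule mult_lprod) (auto intro: tv_mult[OF V] simp: lch hnz)
  also have "\<dots> = \<mu> [:lead_coeff h:] + sum_list (map (\<lambda>c. \<mu> [:-c, 1:]) hs)"
    using tv_const[OF V lch, of a] lin_h by (simp add: vL_def[OF V] cong: map_cong)
  also have X: "\<dots> = \<mu> h"
    by (subst (2) hfac(1), rule mult_lprod[symmetric]) (auto intro: v_mult[OF V] simp: lch hnz)
  finally have 1: "trunc_val \<mu> a h = \<mu> h" .
  have na: "\<forall>c\<in>set hs. c \<noteq> a" using lin_h by blast
  have "vL \<mu> (poly h a) = vL \<mu> (lead_coeff h) + sum_list (map (\<lambda>c. vL \<mu> (a - c)) hs)"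
    by (subst hfac(1), rule poly_lprod[OF lch na])
  also have "\<dots> = \<mu> [:lead_coeff h:] + sum_list (map (\<lambda>c. \<mu> [:-c, 1:]) hs)"
    using lin_h by (simp add: vL_def[OF V] cong: map_cong)
  also note X
  finally have 2: "vL \<mu> (poly h a) = \<mu> h" .
  have "poly h a \<noteq> 0" using hroots na by blast
  thus ?thesis using 1 2 by simp
qed


lemma L7: fixes x y n M :: "'h::linordered_ab_group_add"
  shows "y + n = M \<Longrightarrow> M < x + n \<Longrightarrow> y < x"
  by (metis add_less_cancel_right)

lemma tv_one: "trunc_val \<mu> a 1 = 0"
proof -
  have "trunc_val \<mu> a [:1:] = vL \<mu> 1" by (rule tv_const[OF V]) simp
  thus ?thesis using v_one[OF VL[OF V]] by (simp add: one_pCons)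
qed

lemma tv_pow: "f \<noteq> 0 \<Longrightarrow> trunc_val \<mu> a (f ^ k) = nsmul k (trunc_val \<mu> a f)"
  by (induction k) (simp_all add: tv_mult[OF V] tv_one)

lemma tv_smult: "c \<noteq> 0 \<Longrightarrow> f \<noteq> 0 \<Longrightarrow> trunc_val \<mu> a (smult c f) = vL \<mu> c + trunc_val \<mu> a f"
proof -
  assume "c \<noteq> 0" "f \<noteq> 0"
  have "smult c f = [:c:] * f" by simp
  thus ?thesis using tv_mult[OF V, of "[:c:]" f a] tv_const[OF V \<open>c \<noteq> 0\<close>, of a] \<open>c \<noteq> 0\<close> \<open>f \<noteq> 0\<close> by simp
qed

lemma Qe: "nsmul e (\<mu> Q) = \<mu> h"
proof -
  have "Q ^ e \<in> Kpoly K" by (rule Kpoly_power[OF SF QK])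
  hence "\<mu> (Q ^ e) = \<mu> h" using Qh munu hK hnz Qnz by (metis power_not_zero)
  thus ?thesis using v_power[OF V Qnz] by simp
qed

lemma claim1: "trunc_val_frac \<mu> a (Fract (Q ^ e) h) = 0"
proof -
  have "trunc_val_frac \<mu> a (Fract (Q ^ e) h) = trunc_val \<mu> a (Q ^ e) - trunc_val \<mu> a h"
    by (rule tv_frac[OF V]) (use Qnz hnz in auto)
  also have "\<dots> = 0" using tv_pow[OF Qnz, of e] tvQ tvh Qe by simp
  finally show ?thesis .
qed

definition LB :: "'L poly \<Rightarrow> 'g \<Rightarrow> bool" where
  "LB f m \<longleftrightarrow> (\<forall>k. coeff (pcompose f [:a, 1:]) k \<noteq> 0 \<longrightarrow> m \<le> wt \<mu> a (pcompose f [:a, 1:]) k)"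
definition SLB :: "'L poly \<Rightarrow> 'g \<Rightarrow> bool" where
  "SLB f m \<longleftrightarrow> (\<forall>k. coeff (pcompose f [:a, 1:]) k \<noteq> 0 \<longrightarrow> m < wt \<mu> a (pcompose f [:a, 1:]) k)"

lemma LB_tv: "f \<noteq> 0 \<Longrightarrow> m \<le> trunc_val \<mu> a f \<Longrightarrow> LB f m"
  unfolding LB_def tv_TT[OF V] using TT_le[OF V] order_trans by blast

lemma SLB_tv: "f \<noteq> 0 \<Longrightarrow> m < trunc_val \<mu> a f \<Longrightarrow> SLB f m"
  unfolding SLB_def tv_TT[OF V] using TT_le[OF V] order_less_le_trans by blast

lemma SLB_LB: "SLB f m \<Longrightarrow> LB f m"
  unfolding SLB_def LB_def by (auto intro: less_imp_le)

lemma LB_add: assumes "LB f m" "LB g m" shows "LB (f + g) m"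
  unfolding LB_def
proof (intro allI impI)
  fix k
  let ?F = "pcompose f [:a, 1:]" and ?G = "pcompose g [:a, 1:]"
  assume nz: "coeff (pcompose (f + g) [:a, 1:]) k \<noteq> 0"
  have c: "coeff (pcompose (f + g) [:a, 1:]) k = coeff ?F k + coeff ?G k" by (simp add: pcompose_add)
  have "m - nsmul k (dl \<mu> a) \<le> vL \<mu> (coeff ?F k + coeff ?G k)"
  proof (rule v_ge2[OF VL[OF V]])
    show "coeff ?F k + coeff ?G k \<noteq> 0" using nz c by simp
    show "m - nsmul k (dl \<mu> a) \<le> vL \<mu> (coeff ?F k)" if "coeff ?F k \<noteq> 0"
      using assms(1) that unfolding LB_def wt_def[OF V] by (simp add: diff_le_eq)
    show "m - nsmul k (dl \<mu> a) \<le> vL \<mu> (coeff ?G k)" if "coeff ?G k \<noteq> 0"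
      using assms(2) that unfolding LB_def wt_def[OF V] by (simp add: diff_le_eq)
  qed
  thus "m \<le> wt \<mu> a (pcompose (f + g) [:a, 1:]) k" unfolding wt_def[OF V] c by (simp add: diff_le_eq)
qed

lemma SLB_add: assumes "SLB f m" "SLB g m" shows "SLB (f + g) m"
  unfolding SLB_def
proof (intro allI impI)
  fix k
  let ?F = "pcompose f [:a, 1:]" and ?G = "pcompose g [:a, 1:]"
  assume nz: "coeff (pcompose (f + g) [:a, 1:]) k \<noteq> 0"
  have c: "coeff (pcompose (f + g) [:a, 1:]) k = coeff ?F k + coeff ?G k" by (simp add: pcompose_add)
  have "m - nsmul k (dl \<mu> a) < vL \<mu> (coeff ?F k + coeff ?G k)"
  proof (rule v_gt2[OF VL[OF V]])
    show "coeff ?F k + coeff ?G k \<noteq> 0" using nz c by simp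
    show "m - nsmul k (dl \<mu> a) < vL \<mu> (coeff ?F k)" if "coeff ?F k \<noteq> 0"
      using assms(1) that unfolding SLB_def wt_def[OF V] by (simp add: diff_less_eq)
    show "m - nsmul k (dl \<mu> a) < vL \<mu> (coeff ?G k)" if "coeff ?G k \<noteq> 0"
      using assms(2) that unfolding SLB_def wt_def[OF V] by (simp add: diff_less_eq)
  qed
  thus "m < wt \<mu> a (pcompose (f + g) [:a, 1:]) k" unfolding wt_def[OF V] c by (simp add: diff_less_eq)
qed

lemma LB_sum: "finite A \<Longrightarrow> (\<And>i. i \<in> A \<Longrightarrow> LB (t i) m) \<Longrightarrow> LB (sum t A) m"
proof (induction A rule: finite_induct)
  case empty thus ?case by (simp add: LB_def)
next
  case (insert x F) thus ?case by (simp add: LB_add)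
qed

lemma SLB_sum: "finite A \<Longrightarrow> (\<And>i. i \<in> A \<Longrightarrow> SLB (t i) m) \<Longrightarrow> SLB (sum t A) m"
proof (induction A rule: finite_induct)
  case empty thus ?case by (simp add: SLB_def)
next
  case (insert x F) thus ?case by (simp add: SLB_add)
qed

lemma main_nonzero: assumes A: "SLB A M" and G: "G \<noteq> 0" "trunc_val \<mu> a G = M"
  shows "A + G \<noteq> 0 \<and> trunc_val \<mu> a (A + G) = M"
proof -
  let ?A = "pcompose A [:a, 1:]" and ?G = "pcompose G [:a, 1:]" and ?P = "pcompose (A + G) [:a, 1:]"
  obtain k where k: "coeff ?G k \<noteq> 0" "wt \<mu> a ?G k = M"
    using TT_att[OF V sh_nz[OF V G(1)]] G(2) tv_TT[OF V] by metis
  have c: "coeff ?P k = coeff ?A k + coeff ?G k" by (simp add: pcompose_add)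
  have "coeff ?A k + coeff ?G k \<noteq> 0 \<and> vL \<mu> (coeff ?A k + coeff ?G k) = vL \<mu> (coeff ?G k)"
  proof (rule v_strict[OF VL[OF V] k(1)])
    assume "coeff ?A k \<noteq> 0"
    hence "M < vL \<mu> (coeff ?A k) + nsmul k (dl \<mu> a)" using A unfolding SLB_def wt_def[OF V] by simp
    thus "vL \<mu> (coeff ?G k) < vL \<mu> (coeff ?A k)" using k(2) L7 unfolding wt_def[OF V] by blast
  qed
  hence Pk: "coeff ?P k \<noteq> 0" "wt \<mu> a ?P k = M" using k(2) c unfolding wt_def[OF V] by auto
  have "LB (A + G) M" by (rule LB_add[OF SLB_LB[OF A] LB_tv[OF G(1)]]) (simp add: G(2))
  hence "TT \<mu> a ?P = M" unfolding LB_def by (intro TT_eqI[OF V _ Pk]) auto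
  moreover have "A + G \<noteq> 0" using Pk(1) by auto
  ultimately show ?thesis using tv_TT[OF V] by simp
qed


lemma fract_pow: "Fract (p::'L poly) q ^ i = Fract (p ^ i) (q ^ i)"
  by (induction i) (simp_all add: One_fract_def)

lemma sum_fract: "finite A \<Longrightarrow> (D::'L poly) \<noteq> 0 \<Longrightarrow> (\<Sum>i\<in>A. Fract (p i) D) = Fract (\<Sum>i\<in>A. p i) D"
proof (induction A rule: finite_induct)
  case empty thus ?case by (simp add: Zero_fract_def eq_fract)
next
  case (insert x F)
  have "Fract (p x) D + Fract (sum p F) D = Fract (D * (p x + sum p F)) (D * D)"
    using insert.prems by (simp add: algebra_simps)
  also have "\<dots> = Fract (p x + sum p F) D" by (rule mult_fract_cancel) (use insert.prems in simp)
  finally show ?case using insert by simp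
qed

lemma residue:
  fixes n :: nat and c :: "nat \<Rightarrow> 'L"
  assumes VR: "\<forall>i\<le>n. in_val_ring (\<lambda>c. \<mu> [:c:]) (c i)" and NM: "\<exists>i\<le>n. \<not> in_max_ideal (\<lambda>c. \<mu> [:c:]) (c i)"
  shows "\<not> in_max_ideal (trunc_val_frac \<mu> a) (\<Sum>i\<le>n. Fract [:c i:] 1 * Fract (Q ^ e) h ^ i)"
proof -
  define M where "M = nsmul n (\<mu> h)"
  define Pt where "Pt i = smult (c i) (Q ^ (e * i) * h ^ (n - i))" for i
  define P where "P = (\<Sum>i\<le>n. Pt i)"
  have hn: "h ^ n \<noteq> 0" using hnz by simp
  have vr: "c i = 0 \<or> 0 \<le> vL \<mu> (c i)" if "i \<le> n" for i
    using VR that unfolding in_val_ring_def vL_def[OF V] by blast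
  have term_eq: "Fract [:c i:] 1 * Fract (Q ^ e) h ^ i = Fract (Pt i) (h ^ n)" if "i \<le> n" for i
  proof -
    have hh: "h ^ n = h ^ (n - i) * h ^ i" using that by (simp add: power_add[symmetric])
    have "Fract [:c i:] 1 * Fract (Q ^ e) h ^ i = Fract ([:c i:] * Q ^ (e * i)) (h ^ i)"
      by (simp add: fract_pow power_mult)
    also have "\<dots> = Fract (Pt i) (h ^ n)"
      by (subst eq_fract(1)) (use hnz in \<open>auto simp: Pt_def hh algebra_simps\<close>)
    finally show ?thesis .
  qed
  have S: "(\<Sum>i\<le>n. Fract [:c i:] 1 * Fract (Q ^ e) h ^ i) = Fract P (h ^ n)"
    unfolding P_def by (subst sum_fract[OF finite_atMost hn, symmetric]) (auto intro!: sum.cong simp: term_eq)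
  have tvPt: "trunc_val \<mu> a (Pt i) = vL \<mu> (c i) + M" if "i \<le> n" "c i \<noteq> 0" for i
  proof -
    have "trunc_val \<mu> a (Pt i) = vL \<mu> (c i) + (nsmul (e * i) (\<mu> Q) + nsmul (n - i) (\<mu> h))"
      unfolding Pt_def using that hnz Qnz
      by (simp add: tv_smult tv_mult[OF V] tv_pow tvQ tvh)
    also have "nsmul (e * i) (\<mu> Q) = nsmul i (\<mu> h)"
      using Qe nsmul_mult[of i e "\<mu> Q"] by (simp add: mult.commute)
    also have "nsmul i (\<mu> h) + nsmul (n - i) (\<mu> h) = M"
      unfolding M_def using nsmul_add[of i "n - i" "\<mu> h"] that(1) by simp
    finally show ?thesis .
  qed
  define i0 where "i0 = (LEAST i. i \<le> n \<and> c i \<noteq> 0 \<and> vL \<mu> (c i) \<le> 0)"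
  have ex: "\<exists>i. i \<le> n \<and> c i \<noteq> 0 \<and> vL \<mu> (c i) \<le> 0"
    using NM unfolding in_max_ideal_def vL_def[OF V] by (auto simp: not_less)
  have i0: "i0 \<le> n" "c i0 \<noteq> 0" "vL \<mu> (c i0) \<le> 0" using LeastI_ex[OF ex] unfolding i0_def[symmetric] by auto
  have ci0: "vL \<mu> (c i0) = 0" using i0 vr[of i0] by simp
  have below: "c i = 0 \<or> 0 < vL \<mu> (c i)" if "i < i0" for i
    using not_less_Least[OF that[unfolded i0_def]] vr[of i] that i0(1) by (auto simp: not_le)
  define A where "A = (\<Sum>i<i0. Pt i)"
  define Bt where "Bt i = smult (c i) (Q ^ (e * (i - i0)) * h ^ (n - i))" for i
  define B where "B = (\<Sum>i\<in>{i0..n}. Bt i)"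
  define G where "G = Q ^ (e * i0) * B"
  have PAG: "P = A + G"
  proof -
    have split: "{..n} = {..<i0} \<union> {i0..n}" using i0(1) by auto
    have "P = A + (\<Sum>i\<in>{i0..n}. Pt i)" unfolding P_def A_def split
      by (rule sum.union_disjoint) auto
    moreover have "Pt i = Q ^ (e * i0) * Bt i" if "i \<in> {i0..n}" for i
    proof -
      have eq: "e * i = e * i0 + e * (i - i0)" using that by (simp add: algebra_simps)
      have "Q ^ (e * i) = Q ^ (e * i0 + e * (i - i0))" using eq by (rule arg_cong)
      also have "\<dots> = Q ^ (e * i0) * Q ^ (e * (i - i0))" by (rule power_add)
      finally have Qeq: "Q ^ (e * i) = Q ^ (e * i0) * Q ^ (e * (i - i0))" .
      show ?thesis unfolding Pt_def Bt_def Qeq by (simp only: mult_smult_right mult.assoc)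
    qed
    ultimately show ?thesis unfolding G_def B_def by (simp add: sum_distrib_left)
  qed
  have SA: "SLB A M" unfolding A_def
  proof (rule SLB_sum)
    fix i assume i: "i \<in> {..<i0}"
    show "SLB (Pt i) M"
    proof (cases "c i = 0")
      case True thus ?thesis by (simp add: Pt_def SLB_def)
    next
      case False
      hence "0 < vL \<mu> (c i)" using below i by auto
      moreover have "Pt i \<noteq> 0" using False hnz Qnz by (simp add: Pt_def)
      ultimately show ?thesis using tvPt[of i] i i0(1) False
        by (intro SLB_tv) (auto simp: add_pos_nonneg less_add_same_cancel2)
    qed
  qed simp
  define MB where "MB = nsmul (n - i0) (\<mu> h)"
  have LBB: "LB B MB" unfolding B_def
  proof (rule LB_sum)
    fix i assume i: "i \<in> {i0..n}"
    show "LB (Bt i) MB"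
    proof (cases "c i = 0")
      case True thus ?thesis by (simp add: Bt_def LB_def)
    next
      case False
      have ge: "0 \<le> vL \<mu> (c i)" using vr[of i] i False by auto
      have "trunc_val \<mu> a (Bt i) = vL \<mu> (c i) + (nsmul (e * (i - i0)) (\<mu> Q) + nsmul (n - i) (\<mu> h))"
        unfolding Bt_def using False hnz Qnz by (simp add: tv_smult tv_mult[OF V] tv_pow tvQ tvh)
      also have "nsmul (e * (i - i0)) (\<mu> Q) = nsmul (i - i0) (\<mu> h)"
        using Qe nsmul_mult[of "i - i0" e "\<mu> Q"] by (simp add: mult.commute)
      also have "nsmul (i - i0) (\<mu> h) + nsmul (n - i) (\<mu> h) = MB"
        unfolding MB_def using nsmul_add[of "i - i0" "n - i" "\<mu> h"] i by simp
      finally have "trunc_val \<mu> a (Bt i) = vL \<mu> (c i) + MB" .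
      moreover have "Bt i \<noteq> 0" using False hnz Qnz by (simp add: Bt_def)
      ultimately show ?thesis using ge by (intro LB_tv) (auto simp: add_increasing)
    qed
  qed simp
  have B0: "coeff (pcompose B [:a, 1:]) 0 = c i0 * poly h a ^ (n - i0)"
  proof -
    have "coeff (pcompose B [:a, 1:]) 0 = poly B a" by (simp add: poly_0_coeff_0[symmetric] poly_pcompose)
    also have "\<dots> = (\<Sum>i\<in>{i0..n}. c i * (poly Q a ^ (e * (i - i0)) * poly h a ^ (n - i)))"
      unfolding B_def Bt_def by (simp add: poly_sum)
    also have "\<dots> = c i0 * (poly Q a ^ (e * (i0 - i0)) * poly h a ^ (n - i0)) +
        (\<Sum>i\<in>{i0..n} - {i0}. c i * (poly Q a ^ (e * (i - i0)) * poly h a ^ (n - i)))"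
      by (rule sum.remove) (use i0(1) in auto)
    also have "(\<Sum>i\<in>{i0..n} - {i0}. c i * (poly Q a ^ (e * (i - i0)) * poly h a ^ (n - i))) = 0"
      by (rule sum.neutral) (use e1 Qa in \<open>auto simp: power_0_left\<close>)
    finally show ?thesis by simp
  qed
  have B0nz: "coeff (pcompose B [:a, 1:]) 0 \<noteq> 0" using B0 i0(2) tvh by simp
  have wB0: "wt \<mu> a (pcompose B [:a, 1:]) 0 = MB"
  proof -
    have "vL \<mu> (c i0 * poly h a ^ (n - i0)) = vL \<mu> (c i0) + nsmul (n - i0) (vL \<mu> (poly h a))"
      using i0(2) tvh v_mult[OF VL[OF V]] v_power[OF VL[OF V]] by simp
    thus ?thesis unfolding wt_def[OF V] B0 MB_def using ci0 tvh by simp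
  qed
  have Bnz: "B \<noteq> 0" using B0nz by auto
  have tvB: "trunc_val \<mu> a B = MB"
    unfolding tv_TT[OF V] using LBB unfolding LB_def by (intro TT_eqI[OF V _ B0nz wB0]) auto
  have Gnz: "G \<noteq> 0" unfolding G_def using Bnz Qnz by simp
  have tvG: "trunc_val \<mu> a G = M"
  proof -
    have "trunc_val \<mu> a G = nsmul (e * i0) (\<mu> Q) + MB"
      unfolding G_def using Bnz Qnz by (simp add: tv_mult[OF V] tv_pow tvQ tvB)
    also have "nsmul (e * i0) (\<mu> Q) = nsmul i0 (\<mu> h)"
      using Qe nsmul_mult[of i0 e "\<mu> Q"] by (simp add: mult.commute)
    also have "nsmul i0 (\<mu> h) + MB = M"
      unfolding MB_def M_def using nsmul_add[of i0 "n - i0" "\<mu> h"] i0(1) by simp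
    finally show ?thesis .
  qed
  have Pres: "P \<noteq> 0 \<and> trunc_val \<mu> a P = M" unfolding PAG by (rule main_nonzero[OF SA Gnz tvG])
  have "trunc_val_frac \<mu> a (Fract P (h ^ n)) = 0"
    using tv_frac[OF V, of P "h ^ n" a] Pres hn tv_pow[OF hnz, of n] tvh M_def by simp
  moreover have "Fract P (h ^ n) \<noteq> 0" using Pres hn by (simp add: Zero_fract_def eq_fract)
  ultimately show ?thesis unfolding S in_max_ideal_def by simp
qed

end

theorem proposition3p7:
  fixes K :: "'L::field set"
    and \<nu> \<mu> :: "'L poly \<Rightarrow> 'g::linordered_ab_group_add"
    and Q h :: "'L poly" and a :: 'L and e :: nat
  assumes "is_algebraic_closure_of K"
    and "valuation_on (Kpoly K) \<nu>"
    and "valuation_on UNIV \<mu>"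
    and "\<forall>f\<in>Kpoly K. f \<noteq> 0 \<longrightarrow> \<mu> f = \<nu> f"
    and "key_polynomial K \<nu> Q"
    and "optimizing_root \<mu> Q a"
    and "1 \<le> e"
    and "h \<in> Kpoly K" and "h \<noteq> 0" and "degree h < degree Q"
    and "\<nu> (Q ^ e) = \<nu> h"
  shows "trunc_val_frac \<mu> a (Fract (Q ^ e) h) = 0 \<and>
         residue_transcendental (trunc_val_frac \<mu> a) (\<lambda>c. Fract [:c:] 1) (\<lambda>c. \<mu> [:c:])
           (Fract (Q ^ e) h)"
proof -
  note H = assms
  have C1: "trunc_val_frac \<mu> a (Fract (Q ^ e) h) = 0" by (rule claim1[OF H])
  show ?thesis
    unfolding residue_transcendental_def
  proof (intro conjI allI impI)
    show "trunc_val_frac \<mu> a (Fract (Q ^ e) h) = 0" by (rule C1)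
    show "in_val_ring (trunc_val_frac \<mu> a) (Fract (Q ^ e) h)" unfolding in_val_ring_def using C1 by simp
    fix n :: nat and c :: "nat \<Rightarrow> 'L"
    assume "(\<forall>i\<le>n. in_val_ring (\<lambda>c. \<mu> [:c:]) (c i)) \<and> (\<exists>i\<le>n. \<not> in_max_ideal (\<lambda>c. \<mu> [:c:]) (c i))"
    thus "\<not> in_max_ideal (trunc_val_frac \<mu> a) (\<Sum>i\<le>n. Fract [:c i:] 1 * Fract (Q ^ e) h ^ i)"
      using residue[OF H] by blast
  qed
qed


end
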